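(* Let $\mathbf n\ge 2$, let $A'=\mathbb C^{2\mathbf n-1}$ with basis $e_1,\dots,e_{2\mathbf n-1}$, and let $U,V\cong\mathbb C^{\mathbf n}$ with bases $u_1,\dots,u_{\mathbf n}$ and $v_1,\dots,v_{\mathbf n}$. Define the linear map $\psi:\Lambda^{\mathbf n-1}A'\otimes V\to\Lambda^{\mathbf n}A'\otimes U$ by $$\psi(e_S\otimes v_k)=\sum_{\substack{1\le m\le\mathbf n\\ (m,k)\ne(\mathbf n,1)}} e_{m+k-1}\wedge e_S\otimes u_m,$$ where for $S=\{s_1<\dots<s_{\mathbf n-1}\}\subset\{1,\dots,2\mathbf n-1\}$, $e_S=e_{s_1}\wedge\cdots\wedge e_{s_{\mathbf n-1}}$. Then $\operatorname{rank}\psi=\mathbf n\binom{2\mathbf n-1}{\mathbf n}-1$; more precisely, the image of $\psi$ is the span of all basis vectors $e_P\otimes u_l$ ($P\subset\{1,\dots,2\mathbf n-1\}$, $|P|=\mathbf n$, $1\le l\le\mathbf n$) other than $e_{\{1,\dots,\mathbf n\}}\otimes u_{\mathbf n}$.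
   Context: This map is the Koszul flattening $\Lambda^{\mathbf n-1}A'\otimes V\to\Lambda^{\mathbf n}A'\otimes U$ of the reduced tensor $M^{red}_{\langle 1,1,\mathbf n\rangle}$ restricted via the linear map $x^i_j\mapsto e_{i+j-1}$. *)

theory Defs
  imports "HOL-Analysis.Analysis" "HOL-Library.Function_Algebras"
begin

text \<open>A vector of \<open>\<Lambda>^(n-1) A' \<otimes> V\<close> is a function on pairs (S,k)
  (coefficient of e_S \<otimes> v_k), supported on the index set \<open>src_idx n\<close>; a vector of
  \<open>\<Lambda>^n A' \<otimes> U\<close> is a function on pairs (P,l) (coefficient of e_P \<otimes> u_l),
  supported on \<open>tgt_idx n\<close>. Here e_S = e_{s_1} \<wedge> ... \<wedge> e_{s_r} with s_1 < ... < s_r.\<close>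

definition src_idx :: "nat \<Rightarrow> (nat set \<times> nat) set" where
  "src_idx n = {(S,k). S \<subseteq> {1..2*n-1} \<and> card S = n - 1 \<and> k \<in> {1..n}}"

definition tgt_idx :: "nat \<Rightarrow> (nat set \<times> nat) set" where
  "tgt_idx n = {(P,l). P \<subseteq> {1..2*n-1} \<and> card P = n \<and> l \<in> {1..n}}"

definition src_space :: "nat \<Rightarrow> (nat set \<times> nat \<Rightarrow> complex) set" where
  "src_space n = {f. \<forall>x. x \<notin> src_idx n \<longrightarrow> f x = 0}"

text \<open>Coefficient of e_P in e_j \<wedge> e_S: zero unless j \<notin> S and P = S \<union> {j};
  then the sign (-1)^#{s \<in> S. s < j}.\<close>
definition wedge_coeff :: "nat \<Rightarrow> nat set \<Rightarrow> nat set \<Rightarrow> complex" where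
  "wedge_coeff j S P =
     (if j \<notin> S \<and> P = insert j S then (-1) ^ card {s\<in>S. s < j} else 0)"

text \<open>Coefficient of e_P \<otimes> u_l in \<psi>(e_S \<otimes> v_k).\<close>
definition psi_coeff :: "nat \<Rightarrow> nat set \<times> nat \<Rightarrow> nat set \<times> nat \<Rightarrow> complex" where
  "psi_coeff n Sk Pl =
     (case Sk of (S,k) \<Rightarrow> case Pl of (P,l) \<Rightarrow>
        if 1 \<le> l \<and> l \<le> n \<and> (l,k) \<noteq> (n,1) then wedge_coeff (l+k-1) S P else 0)"

definition psi :: "nat \<Rightarrow> (nat set \<times> nat \<Rightarrow> complex) \<Rightarrow> (nat set \<times> nat \<Rightarrow> complex)" where
  "psi n f = (\<lambda>Pl. \<Sum>Sk\<in>src_idx n. f Sk * psi_coeff n Sk Pl)"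

definition cscale :: "complex \<Rightarrow> ('a \<Rightarrow> complex) \<Rightarrow> ('a \<Rightarrow> complex)" where
  "cscale c f = (\<lambda>x. c * f x)"

end

theory Submission
  imports Defs
begin


definition sg :: "nat \<Rightarrow> nat set \<Rightarrow> complex" where
  "sg j P = (-1) ^ card {s\<in>P. s < j}"

lemma sg_nz: "sg j P \<noteq> 0"
  by (simp add: sg_def)

definition supp_ok :: "nat \<Rightarrow> nat \<Rightarrow> nat \<Rightarrow> (nat set \<times> nat \<Rightarrow> complex) \<Rightarrow> bool" where
  "supp_ok p q r f \<longleftrightarrow> (\<forall>S k. f (S,k) \<noteq> 0 \<longrightarrow> S \<subseteq> {1..p+q-1} \<and> card S = r \<and> 1 \<le> k \<and> k \<le> q)"

definition eqs :: "bool \<Rightarrow> nat \<Rightarrow> nat \<Rightarrow> nat \<Rightarrow> (nat set \<times> nat \<Rightarrow> complex) \<Rightarrow> bool" where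
  "eqs ex p q r f \<longleftrightarrow> (\<forall>P m. P \<subseteq> {1..p+q-1} \<longrightarrow> card P = Suc r \<longrightarrow> 1 \<le> m \<longrightarrow> m \<le> p \<longrightarrow>
     (\<Sum>j\<in>P. if m \<le> j \<and> j < q + m \<and> \<not>(ex \<and> m = p \<and> j = p) then sg j P * f (P - {j}, j + 1 - m) else 0) = 0)"

lemma sg_insert_less: "j < N \<Longrightarrow> sg j (insert N P0) = sg j P0"
  unfolding sg_def by (rule arg_cong[where f="\<lambda>x. (-1)^card x"]) auto

lemma reduce:
  assumes supp: "supp_ok p q r f" and eq: "eqs ex p q r f" and p1: "1 \<le> p" and q1: "1 \<le> q"
    and exq: "ex \<longrightarrow> 2 \<le> q"
    and IH: "\<And>g. supp_ok (p-1) q (r-1) g \<Longrightarrow> eqs False (p-1) q (r-1) g \<Longrightarrow> 1 \<le> r \<Longrightarrow> g = 0"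
  shows "supp_ok p (q-1) r f \<and> eqs ex p (q-1) r f"
proof -
  define N where "N = p + q - 1"
  have suppD: "S \<subseteq> {1..N} \<and> card S = r \<and> 1 \<le> k \<and> k \<le> q" if "f (S,k) \<noteq> 0" for S k
    using supp that unfolding supp_ok_def N_def by blast
  have eqD: "(\<Sum>j\<in>P. if m \<le> j \<and> j < q + m \<and> \<not>(ex \<and> m = p \<and> j = p) then sg j P * f (P - {j}, j + 1 - m) else 0) = 0"
    if "P \<subseteq> {1..N}" "card P = Suc r" "1 \<le> m" "m \<le> p" for P m
    using eq that unfolding eqs_def N_def by blast
  have A: "f (S,k) = 0" if "N \<in> S" for S k
  proof (cases "r = 0")
    case True
    show ?thesis
    proof (rule ccontr)
      assume "f (S,k) \<noteq> 0"
      then have "S \<subseteq> {1..N}" "card S = 0" using suppD True by auto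
      then have "S = {}" using finite_subset[of S "{1..N}"] by auto
      then show False using that by auto
    qed
  next
    case False
    define g where "g = (\<lambda>(S,k). if N \<in> S then 0 else f (insert N S, k))"
    have gsupp: "supp_ok (p-1) q (r-1) g"
      unfolding supp_ok_def
    proof (intro allI impI)
      fix S k assume gn: "g (S,k) \<noteq> 0"
      then have NS: "N \<notin> S" and fn: "f (insert N S, k) \<noteq> 0" unfolding g_def by (auto split: if_splits)
      from suppD[OF fn] have h: "insert N S \<subseteq> {1..N}" "card (insert N S) = r" "1 \<le> k" "k \<le> q" by auto
      have fin: "finite S" using h(1) finite_subset by (metis finite_atLeastAtMost subset_insertI2 subset_refl insert_subset)
      have "S \<subseteq> {1..p - 1 + q - 1}"
      proof
        fix x assume "x \<in> S"
        with h(1) NS have "x \<in> {1..N}" "x \<noteq> N" by auto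
        then show "x \<in> {1..p - 1 + q - 1}" unfolding N_def using p1 by auto
      qed
      moreover have "card S = r - 1" using h(2) fin NS by simp
      ultimately show "S \<subseteq> {1..p - 1 + q - 1} \<and> card S = r - 1 \<and> 1 \<le> k \<and> k \<le> q" using h by simp
    qed
    have geqs: "eqs False (p-1) q (r-1) g"
      unfolding eqs_def
    proof (intro allI impI)
      fix P0 m assume P0: "P0 \<subseteq> {1..p - 1 + q - 1}" and cP0: "card P0 = Suc (r - 1)" and m1: "1 \<le> m" and mp: "m \<le> p - 1"
      have NP0: "N \<notin> P0"
      proof
        assume "N \<in> P0"
        then have "N \<le> p - 1 + q - 1" using P0 by auto
        then show False using p1 q1 unfolding N_def by simp
      qed
      have fin: "finite P0" using P0 finite_subset by blast
      let ?P = "insert N P0"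
      have "?P \<subseteq> {1..N}"
      proof
        fix x assume x: "x \<in> ?P"
        show "x \<in> {1..N}"
        proof (cases "x = N")
          case True then show ?thesis using p1 q1 unfolding N_def by auto
        next
          case False then have "x \<in> {1..p - 1 + q - 1}" using x P0 by auto
          then show ?thesis unfolding N_def by auto
        qed
      qed
      moreover have "card ?P = Suc r" using cP0 fin NP0 False by simp
      ultimately have E: "(\<Sum>j\<in>?P. if m \<le> j \<and> j < q + m \<and> \<not>(ex \<and> m = p \<and> j = p) then sg j ?P * f (?P - {j}, j + 1 - m) else 0) = 0"
        using eqD[of ?P m] m1 mp by simp
      have "(\<Sum>j\<in>?P. if m \<le> j \<and> j < q + m \<and> \<not>(ex \<and> m = p \<and> j = p) then sg j ?P * f (?P - {j}, j + 1 - m) else 0)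
          = (\<Sum>j\<in>P0. if m \<le> j \<and> j < q + m \<and> \<not>(ex \<and> m = p \<and> j = p) then sg j ?P * f (?P - {j}, j + 1 - m) else 0)"
      proof -
        have c: "\<not> (m \<le> N \<and> N < q + m \<and> \<not>(ex \<and> m = p \<and> N = p))" using mp p1 unfolding N_def by auto
        show ?thesis by (simp only: sum.insert[OF fin NP0] if_not_P[OF c]) simp
      qed
      also have "\<dots> = (\<Sum>j\<in>P0. if m \<le> j \<and> j < q + m \<and> \<not>(False \<and> m = p - 1 \<and> j = p - 1) then sg j P0 * g (P0 - {j}, j + 1 - m) else 0)"
      proof (rule sum.cong[OF refl])
        fix j assume j: "j \<in> P0"
        have "j \<in> {1..p - 1 + q - 1}" using j P0 by blast
        then have jN: "j < N" using p1 q1 unfolding N_def by auto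
        have e1: "?P - {j} = insert N (P0 - {j})" using jN by auto
        have e2: "N \<notin> P0 - {j}" using NP0 by auto
        have "g (P0 - {j}, j + 1 - m) = f (insert N (P0 - {j}), j + 1 - m)" unfolding g_def by (simp only: prod.case if_not_P[OF e2])
        then have "f (?P - {j}, j + 1 - m) = g (P0 - {j}, j + 1 - m)" using e1 by simp
        then show "(if m \<le> j \<and> j < q + m \<and> \<not>(ex \<and> m = p \<and> j = p) then sg j ?P * f (?P - {j}, j + 1 - m) else 0)
          = (if m \<le> j \<and> j < q + m \<and> \<not>(False \<and> m = p - 1 \<and> j = p - 1) then sg j P0 * g (P0 - {j}, j + 1 - m) else 0)"
          using sg_insert_less[OF jN] mp p1 by auto
      qed
      finally show "(\<Sum>j\<in>P0. if m \<le> j \<and> j < q + m \<and> \<not>(False \<and> m = p - 1 \<and> j = p - 1) then sg j P0 * g (P0 - {j}, j + 1 - m) else 0) = 0"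
        using E by simp
    qed
    have "g = 0" using IH[OF gsupp geqs] False by simp
    then have "g (S - {N}, k) = 0" by simp
    moreover have "insert N (S - {N}) = S" using that by auto
    ultimately show ?thesis unfolding g_def by auto
  qed
  have B: "f (S,q) = 0" for S
  proof (rule ccontr)
    assume fn: "f (S,q) \<noteq> 0"
    from suppD[OF fn] have S: "S \<subseteq> {1..N}" "card S = r" by auto
    have NS: "N \<notin> S" using A fn by auto
    have fin: "finite S" using S finite_subset by blast
    let ?P = "insert N S"
    have "N \<in> {1..N}" using p1 q1 unfolding N_def by auto
    then have "?P \<subseteq> {1..N}" using S(1) by blast
    moreover have "card ?P = Suc r" using S fin NS by simp
    ultimately have E: "(\<Sum>j\<in>?P. if p \<le> j \<and> j < q + p \<and> \<not>(ex \<and> p = p \<and> j = p) then sg j ?P * f (?P - {j}, j + 1 - p) else 0) = 0"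
      using eqD[of ?P p] p1 by simp
    have "(\<Sum>j\<in>?P. if p \<le> j \<and> j < q + p \<and> \<not>(ex \<and> p = p \<and> j = p) then sg j ?P * f (?P - {j}, j + 1 - p) else 0)
        = sg N ?P * f (S, q) + (\<Sum>j\<in>S. if p \<le> j \<and> j < q + p \<and> \<not>(ex \<and> p = p \<and> j = p) then sg j ?P * f (?P - {j}, j + 1 - p) else 0)"
    proof -
      have condN: "p \<le> N \<and> N < q + p \<and> \<not>(ex \<and> p = p \<and> N = p)" using exq p1 q1 unfolding N_def by auto
      have NSq: "N + 1 - p = q" using p1 q1 unfolding N_def by simp
      have "?P - {N} = S" using NS by auto
      then show ?thesis using fin NS condN NSq by (simp add: sum.insert)
    qed
    also have "(\<Sum>j\<in>S. if p \<le> j \<and> j < q + p \<and> \<not>(ex \<and> p = p \<and> j = p) then sg j ?P * f (?P - {j}, j + 1 - p) else 0) = 0"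
    proof (rule sum.neutral, intro ballI)
      fix j assume "j \<in> S"
      then have "N \<in> ?P - {j}" using NS by auto
      then show "(if p \<le> j \<and> j < q + p \<and> \<not>(ex \<and> p = p \<and> j = p) then sg j ?P * f (?P - {j}, j + 1 - p) else 0) = 0"
        using A by simp
    qed
    finally have "sg N ?P * f (S, q) = 0" using E by simp
    then show False using fn sg_nz by simp
  qed
  have C1: "supp_ok p (q-1) r f"
    unfolding supp_ok_def
  proof (intro allI impI)
    fix S k assume fn: "f (S,k) \<noteq> 0"
    from suppD[OF fn] have h: "S \<subseteq> {1..N}" "card S = r" "1 \<le> k" "k \<le> q" by auto
    have "N \<notin> S" using A fn by auto
    then have "S \<subseteq> {1..p + (q - 1) - 1}"
    proof -
      assume NS: "N \<notin> S"
      show ?thesis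
      proof
        fix x assume "x \<in> S"
        with h(1) NS have "x \<in> {1..N}" "x \<noteq> N" by auto
        then show "x \<in> {1..p + (q - 1) - 1}" unfolding N_def using q1 by auto
      qed
    qed
    moreover have "k \<noteq> q" using B fn by auto
    ultimately show "S \<subseteq> {1..p + (q - 1) - 1} \<and> card S = r \<and> 1 \<le> k \<and> k \<le> q - 1" using h by auto
  qed
  have C2: "eqs ex p (q-1) r f"
    unfolding eqs_def
  proof (intro allI impI)
    fix P m assume P: "P \<subseteq> {1..p + (q - 1) - 1}" and cP: "card P = Suc r" and m1: "1 \<le> m" and mp: "m \<le> p"
    have "P \<subseteq> {1..N}"
    proof
      fix x assume "x \<in> P"
      then have "x \<in> {1..p + (q - 1) - 1}" using P by auto
      then show "x \<in> {1..N}" unfolding N_def using q1 by auto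
    qed
    then have E: "(\<Sum>j\<in>P. if m \<le> j \<and> j < q + m \<and> \<not>(ex \<and> m = p \<and> j = p) then sg j P * f (P - {j}, j + 1 - m) else 0) = 0"
      using eqD[of P m] cP m1 mp by simp
    have "(\<Sum>j\<in>P. if m \<le> j \<and> j < q + m \<and> \<not>(ex \<and> m = p \<and> j = p) then sg j P * f (P - {j}, j + 1 - m) else 0)
       = (\<Sum>j\<in>P. if m \<le> j \<and> j < q - 1 + m \<and> \<not>(ex \<and> m = p \<and> j = p) then sg j P * f (P - {j}, j + 1 - m) else 0)"
    proof (rule sum.cong[OF refl])
      fix j assume "j \<in> P"
      show "(if m \<le> j \<and> j < q + m \<and> \<not>(ex \<and> m = p \<and> j = p) then sg j P * f (P - {j}, j + 1 - m) else 0)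
       = (if m \<le> j \<and> j < q - 1 + m \<and> \<not>(ex \<and> m = p \<and> j = p) then sg j P * f (P - {j}, j + 1 - m) else 0)"
      proof (cases "j = q - 1 + m")
        case True
        then have "j + 1 - m = q" using q1 by simp
        then have "f (P - {j}, j + 1 - m) = 0" using B by simp
        moreover have "\<not> j < q - 1 + m" using True by simp
        ultimately show ?thesis by simp
      next
        case False
        then have "(j < q + m) = (j < q - 1 + m)" using q1 by arith
        then show ?thesis by simp
      qed
    qed
    then show "(\<Sum>j\<in>P. if m \<le> j \<and> j < q - 1 + m \<and> \<not>(ex \<and> m = p \<and> j = p) then sg j P * f (P - {j}, j + 1 - m) else 0) = 0"
      using E by simp
  qed
  show ?thesis using C1 C2 by simp
qed

lemma supp_q0: assumes s: "supp_ok p 0 r f" shows "f = 0"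
proof (rule ext)
  fix x :: "nat set \<times> nat"
  obtain S k where x: "x = (S,k)" by (cases x)
  show "f x = 0 x" using s unfolding supp_ok_def x by auto
qed

lemma L1: "supp_ok p q r f \<Longrightarrow> eqs False p q r f \<Longrightarrow> Suc r \<le> p \<Longrightarrow> f = 0"
proof (induction "p+q" arbitrary: p q r f rule: less_induct)
  case less
  show ?case
  proof (cases "q = 0")
    case True
    then show ?thesis using supp_q0 less.prems(1) by simp
  next
    case False
    have p1: "1 \<le> p" using less.prems(3) by simp
    have IH: "g = 0" if "supp_ok (p-1) q (r-1) g" "eqs False (p-1) q (r-1) g" "1 \<le> r" for g
      using less.hyps[of "p-1" q "r-1" g] that p1 less.prems(3) by simp
    have red: "supp_ok p (q-1) r f \<and> eqs False p (q-1) r f"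
      by (rule reduce[OF less.prems(1) less.prems(2) p1 _ _ IH]) (use False in auto)
    show ?thesis using less.hyps[of p "q-1" r f] red False less.prems(3) by simp
  qed
qed

lemma L2: "2 \<le> p \<Longrightarrow> 1 \<le> q \<Longrightarrow> supp_ok p q (p-1) f \<Longrightarrow> eqs True p q (p-1) f
   \<Longrightarrow> (S,k) \<noteq> ({1..p-1},1) \<Longrightarrow> f (S,k) = 0"
proof (induction q arbitrary: f)
  case 0
  then show ?case by simp
next
  case (Suc q')
  show ?case
  proof (cases "q' = 0")
    case True
    show ?thesis
    proof (rule ccontr)
      assume fn: "f (S,k) \<noteq> 0"
      have h: "S \<subseteq> {1..p + Suc q' - 1} \<and> card S = p - 1 \<and> 1 \<le> k \<and> k \<le> Suc q'"
        using Suc.prems(3) fn unfolding supp_ok_def by blast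
      then have S: "S \<subseteq> {1..p}" "card S = p - 1" "k = 1" using True by auto
      have finS: "finite S" using S(1) finite_subset by blast
      have "\<not> {1..p-1} \<subseteq> S"
      proof
        assume "{1..p-1} \<subseteq> S"
        then have "{1..p-1} = S" using card_subset_eq[OF finS] S(2) by simp
        then show False using Suc.prems(5) S(3) by simp
      qed
      then obtain j0 where j0: "j0 \<in> {1..p-1}" "j0 \<notin> S" by blast
      have "S \<subseteq> {1..p} - {j0}" using S(1) j0 by blast
      moreover have "card ({1..p} - {j0}) = p - 1"
      proof -
        have "j0 \<in> {1..p}" using j0 by auto
        then show ?thesis by (simp add: card_Diff_singleton)
      qed
      ultimately have Seq: "S = {1..p} - {j0}" using card_subset_eq[of "{1..p} - {j0}" S] S(2) by simp
      have E: "(\<Sum>j\<in>{1..p}. if j0 \<le> j \<and> j < Suc q' + j0 \<and> \<not>(True \<and> j0 = p \<and> j = p) then sg j {1..p} * f ({1..p} - {j}, j + 1 - j0) else 0) = 0"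
      proof -
        have "{1..p} \<subseteq> {1..p + Suc q' - 1}" by auto
        moreover have "card {1..p} = Suc (p-1)" using Suc.prems(1) by simp
        moreover have "1 \<le> j0" "j0 \<le> p" using j0 by auto
        ultimately show ?thesis using Suc.prems(4) unfolding eqs_def by blast
      qed
      have "(\<Sum>j\<in>{1..p}. if j0 \<le> j \<and> j < Suc q' + j0 \<and> \<not>(True \<and> j0 = p \<and> j = p) then sg j {1..p} * f ({1..p} - {j}, j + 1 - j0) else 0)
         = (\<Sum>j\<in>{1..p}. if j = j0 then sg j {1..p} * f ({1..p} - {j}, j + 1 - j0) else 0)"
      proof (rule sum.cong[OF refl])
        fix j assume "j \<in> {1..p}"
        have "(j0 \<le> j \<and> j < Suc q' + j0 \<and> \<not>(True \<and> j0 = p \<and> j = p)) = (j = j0)"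
          using True j0 by auto
        then show "(if j0 \<le> j \<and> j < Suc q' + j0 \<and> \<not>(True \<and> j0 = p \<and> j = p) then sg j {1..p} * f ({1..p} - {j}, j + 1 - j0) else 0)
         = (if j = j0 then sg j {1..p} * f ({1..p} - {j}, j + 1 - j0) else 0)" by simp
      qed
      also have "\<dots> = sg j0 {1..p} * f ({1..p} - {j0}, 1)"
      proof -
        have "j0 \<in> {1..p}" using j0 by auto
        then show ?thesis by (simp add: sum.delta)
      qed
      finally have "sg j0 {1..p} * f (S, k) = 0" using E Seq S(3) by simp
      then show False using fn sg_nz by simp
    qed
  next
    case False
    have IH1: "g = 0" if "supp_ok (p-1) (Suc q') (p-1-1) g" "eqs False (p-1) (Suc q') (p-1-1) g" "1 \<le> p - 1" for g
      using L1[OF that(1) that(2)] Suc.prems(1) by simp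
    have red: "supp_ok p q' (p-1) f \<and> eqs True p q' (p-1) f"
      using reduce[OF Suc.prems(3) Suc.prems(4) _ _ _ IH1] Suc.prems(1) False by simp
    show ?thesis using Suc.IH[of f] red False Suc.prems(1) Suc.prems(5) by simp
  qed
qed



lemma sum_fun_app: "(sum f A) y = sum (\<lambda>x. f x y) A"
  by (induction A rule: infinite_finite_induct) auto

lemma finite_src: "finite (src_idx n)"
proof -
  have "src_idx n \<subseteq> Pow {1..2*n-1} \<times> {1..n}" unfolding src_idx_def by auto
  then show ?thesis by (rule finite_subset) auto
qed

lemma finite_tgt: "finite (tgt_idx n)"
proof -
  have "tgt_idx n \<subseteq> Pow {1..2*n-1} \<times> {1..n}" unfolding tgt_idx_def by auto
  then show ?thesis by (rule finite_subset) auto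
qed

lemma psi_formula:
  assumes f: "f \<in> src_space n" and P: "P \<subseteq> {1..2*n-1}" "card P = n" and l: "1 \<le> l" "l \<le> n"
  shows "psi n f (P,l) = (\<Sum>j\<in>P. if l \<le> j \<and> j < n + l \<and> \<not>(True \<and> l = n \<and> j = n) then sg j P * f (P - {j}, j + 1 - l) else 0)"
proof -
  define J where "J = {j\<in>P. l \<le> j \<and> j < n + l \<and> \<not>(True \<and> l = n \<and> j = n)}"
  define h where "h = (\<lambda>j. (P - {j}, j + 1 - l))"
  have finP: "finite P" using P(1) finite_subset by blast
  have "(\<Sum>j\<in>P. if l \<le> j \<and> j < n + l \<and> \<not>(True \<and> l = n \<and> j = n) then sg j P * f (P - {j}, j + 1 - l) else 0)
      = (\<Sum>j\<in>J. sg j P * f (h j))"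
    unfolding J_def h_def using finP by (auto simp: sum.inter_filter intro!: sum.cong)
  also have "\<dots> = (\<Sum>j\<in>J. f (h j) * psi_coeff n (h j) (P,l))"
  proof (rule sum.cong[OF refl])
    fix j assume j: "j \<in> J"
    then have jP: "j \<in> P" and c: "l \<le> j" "j < n + l" "\<not>(l = n \<and> j = n)" unfolding J_def by auto
    have "(l, j + 1 - l) \<noteq> (n, 1)" using c by auto
    moreover have "l + (j + 1 - l) - 1 = j" using c by simp
    moreover have "P = insert j (P - {j})" using jP by auto
    moreover have "{s \<in> P - {j}. s < j} = {s\<in>P. s < j}" by auto
    ultimately have "psi_coeff n (h j) (P,l) = sg j P"
      unfolding psi_coeff_def h_def wedge_coeff_def sg_def using l by simp
    then show "sg j P * f (h j) = f (h j) * psi_coeff n (h j) (P,l)" by simp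
  qed
  also have "\<dots> = (\<Sum>x\<in>h ` J. f x * psi_coeff n x (P,l))"
  proof (rule sum.reindex[symmetric, unfolded comp_def])
    show "inj_on h J"
    proof (rule inj_onI)
      fix a b assume a: "a \<in> J" and b: "b \<in> J" and e: "h a = h b"
      then have "P - {a} = P - {b}" unfolding h_def by simp
      moreover have "a \<in> P" "b \<in> P" using a b unfolding J_def by auto
      ultimately show "a = b" by blast
    qed
  qed
  also have "\<dots> = (\<Sum>x\<in>src_idx n. f x * psi_coeff n x (P,l))"
  proof (rule sum.mono_neutral_left[OF finite_src])
    show "h ` J \<subseteq> src_idx n"
    proof
      fix x assume "x \<in> h ` J"
      then obtain j where j: "j \<in> J" and x: "x = h j" by blast
      then have jP: "j \<in> P" and c: "l \<le> j" "j < n + l" unfolding J_def by auto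
      have "P - {j} \<subseteq> {1..2*n-1}" using P(1) by auto
      moreover have "card (P - {j}) = n - 1" using jP P(2) finP by (simp add: card_Diff_singleton)
      moreover have "1 \<le> j + 1 - l" "j + 1 - l \<le> n" using c by auto
      ultimately show "x \<in> src_idx n" unfolding x h_def src_idx_def by simp
    qed
    show "\<forall>x\<in>src_idx n - h ` J. f x * psi_coeff n x (P, l) = 0"
    proof
      fix x assume x: "x \<in> src_idx n - h ` J"
      obtain S k where xs: "x = (S,k)" by (cases x)
      have k: "1 \<le> k" "k \<le> n" using x unfolding xs src_idx_def by auto
      show "f x * psi_coeff n x (P, l) = 0"
      proof (rule ccontr)
        assume "f x * psi_coeff n x (P, l) \<noteq> 0"
        then have pc: "psi_coeff n (S,k) (P,l) \<noteq> 0" using xs by simp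
        then have lk: "(l,k) \<noteq> (n,1)" and w: "wedge_coeff (l+k-1) S P \<noteq> 0"
          unfolding psi_coeff_def by (auto split: if_splits)
        from w have jS: "l + k - 1 \<notin> S" and PS: "P = insert (l+k-1) S"
          unfolding wedge_coeff_def by (auto split: if_splits)
        define j where "j = l + k - 1"
        have "j \<in> J" unfolding J_def j_def using PS lk k l by auto
        moreover have "x = h j" unfolding xs h_def j_def using PS jS k l by auto
        ultimately show False using x by blast
      qed
    qed
  qed
  finally show ?thesis unfolding psi_def by simp
qed

lemma kernel:
  assumes n2: "2 \<le> n" and f: "f \<in> src_space n" and z: "psi n f = 0"
  shows "x \<noteq> ({1..n-1},1) \<Longrightarrow> f x = 0"
proof -
  assume xn: "x \<noteq> ({1..n-1},1)"
  obtain S k where xs: "x = (S,k)" by (cases x)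
  have nn: "n + n - 1 = 2*n - 1" by simp
  have supp: "supp_ok n n (n-1) f"
    unfolding supp_ok_def
  proof (intro allI impI)
    fix S k assume "f (S,k) \<noteq> 0"
    then have "(S,k) \<in> src_idx n" using f unfolding src_space_def by blast
    then show "S \<subseteq> {1..n + n - 1} \<and> card S = n - 1 \<and> 1 \<le> k \<and> k \<le> n" unfolding src_idx_def nn by auto
  qed
  have eq: "eqs True n n (n-1) f"
    unfolding eqs_def
  proof (intro allI impI)
    fix P m assume P: "P \<subseteq> {1..n + n - 1}" and cP: "card P = Suc (n-1)" and m: "1 \<le> m" "m \<le> n"
    have cP': "card P = n" using cP n2 by simp
    have "psi n f (P,m) = 0" using z by simp
    then show "(\<Sum>j\<in>P. if m \<le> j \<and> j < n + m \<and> \<not> (True \<and> m = n \<and> j = n) then sg j P * f (P - {j}, j + 1 - m) else 0) = 0"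
      using psi_formula[OF f _ cP' m] P nn by simp
  qed
  show "f x = 0" using L2[OF n2 _ supp eq] xn xs n2 by simp
qed



interpretation cs: vector_space "cscale :: complex \<Rightarrow> ('a \<Rightarrow> complex) \<Rightarrow> 'a \<Rightarrow> complex"
  by unfold_locales (simp_all add: cscale_def fun_eq_iff algebra_simps)

definition dl :: "'a \<Rightarrow> 'a \<Rightarrow> complex" where "dl x = (\<lambda>y. if y = x then 1 else 0)"

lemma psi_dl: "s \<in> src_idx n \<Longrightarrow> psi n (dl s) = (\<lambda>Pl. psi_coeff n s Pl)"
proof (rule ext)
  fix Pl assume s: "s \<in> src_idx n"
  have "psi n (dl s) Pl = (\<Sum>Sk\<in>src_idx n. if Sk = s then psi_coeff n Sk Pl else 0)"
    unfolding psi_def dl_def by (rule sum.cong) auto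
  also have "\<dots> = psi_coeff n s Pl" using s finite_src by (simp add: sum.delta')
  finally show "psi n (dl s) Pl = psi_coeff n s Pl" .
qed

lemma psi_add: "psi n (f + g) = psi n f + psi n g"
  by (simp add: psi_def fun_eq_iff distrib_right sum.distrib)

lemma psi_diff: "psi n (f - g) = psi n f - psi n g"
  by (simp add: psi_def fun_eq_iff left_diff_distrib sum_subtractf)

lemma psi_scale: "psi n (cscale c f) = cscale c (psi n f)"
  by (simp add: psi_def cscale_def fun_eq_iff sum_distrib_left mult.assoc)

lemma psi_zero: "psi n 0 = 0"
  by (simp add: psi_def fun_eq_iff)

lemma img_sub:
  assumes f: "f \<in> src_space n" and x: "x \<notin> tgt_idx n - {({1..n},n)}"
  shows "psi n f x = 0"
proof -
  obtain P l where xs: "x = (P,l)" by (cases x)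
  have "psi_coeff n Sk (P,l) = 0" if Sk: "Sk \<in> src_idx n" for Sk
  proof (rule ccontr)
    assume pc: "psi_coeff n Sk (P,l) \<noteq> 0"
    obtain S k where sk: "Sk = (S,k)" by (cases Sk)
    have S: "S \<subseteq> {1..2*n-1}" "card S = n - 1" "1 \<le> k" "k \<le> n" using Sk unfolding sk src_idx_def by auto
    from pc have l: "1 \<le> l" "l \<le> n" and lk: "(l,k) \<noteq> (n,1)" and w: "wedge_coeff (l+k-1) S P \<noteq> 0"
      unfolding psi_coeff_def sk by (auto split: if_splits)
    from w have jS: "l + k - 1 \<notin> S" and PS: "P = insert (l+k-1) S"
      unfolding wedge_coeff_def by (auto split: if_splits)
    have finS: "finite S" using S(1) finite_subset by blast
    have "P \<subseteq> {1..2*n-1}" using PS S l by auto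
    moreover have "card P = n" using PS jS finS S(2) l by simp
    ultimately have "(P,l) \<in> tgt_idx n" unfolding tgt_idx_def using l by auto
    moreover have "(P,l) \<noteq> ({1..n},n)"
    proof
      assume e: "(P,l) = ({1..n},n)"
      then have "k \<noteq> 1" using lk by auto
      then have "l + k - 1 \<notin> {1..n}" using e S by auto
      then show False using PS e by auto
    qed
    ultimately show False using x xs by auto
  qed
  then show ?thesis unfolding xs psi_def by simp
qed

lemma dl_src: "s \<in> src_idx n \<Longrightarrow> dl s \<in> src_space n"
  unfolding src_space_def dl_def by auto

lemma dl_inj: "inj dl"
proof (rule injI)
  fix x y :: 'a assume "dl x = dl y"
  then have "dl x x = dl y x" by simp
  then show "x = y" unfolding dl_def by (auto split: if_splits)
qed

lemma dl_indep: "cs.independent (dl ` X)"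
  unfolding cs.independent_explicit_finite_subsets
proof (intro allI impI ballI)
  fix S u v assume S: "S \<subseteq> dl ` X" and fin: "finite S" and sm: "(\<Sum>v\<in>S. cscale (u v) v) = 0" and v: "v \<in> S"
  obtain x where vx: "v = dl x" using S v by blast
  have "0 = (\<Sum>v\<in>S. cscale (u v) v) x" using sm by simp
  also have "\<dots> = (\<Sum>w\<in>S. u w * w x)" by (simp add: sum_fun_app cscale_def)
  also have "\<dots> = (\<Sum>w\<in>S. if w = v then u w else 0)"
  proof (rule sum.cong[OF refl])
    fix w assume "w \<in> S"
    then obtain y where wy: "w = dl y" using S by blast
    show "u w * w x = (if w = v then u w else 0)"
    proof (cases "w = v")
      case True then show ?thesis unfolding vx dl_def by simp
    next
      case False then have "y \<noteq> x" using wy vx by auto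
      then show ?thesis using False unfolding wy dl_def by simp
    qed
  qed
  also have "\<dots> = u v" using fin v by (simp add: sum.delta')
  finally show "u v = 0" by simp
qed

lemma dl_span:
  fixes X :: "'a set"
  assumes fin: "finite X"
  shows "{g. \<forall>x. x \<notin> X \<longrightarrow> g x = 0} \<subseteq> cs.span (dl ` X)"
proof
  fix g :: "'a \<Rightarrow> complex" assume g: "g \<in> {g. \<forall>x. x \<notin> X \<longrightarrow> g x = 0}"
  have "g = (\<Sum>x\<in>X. cscale (g x) (dl x))"
  proof (rule ext)
    fix y
    have "(\<Sum>x\<in>X. cscale (g x) (dl x)) y = (\<Sum>x\<in>X. if x = y then g x else 0)"
      by (simp add: sum_fun_app cscale_def dl_def) (rule sum.cong, auto)
    also have "\<dots> = g y" using fin g by (simp add: sum.delta)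
    finally show "g y = (\<Sum>x\<in>X. cscale (g x) (dl x)) y" by simp
  qed
  also have "\<dots> \<in> cs.span (dl ` X)"
    by (intro cs.span_sum cs.span_scale cs.span_base) auto
  finally show "g \<in> cs.span (dl ` X)" .
qed

lemma dim_W:
  fixes X :: "'a set"
  assumes fin: "finite X"
  shows "cs.dim {g. \<forall>x. x \<notin> X \<longrightarrow> g x = 0} = card X"
proof -
  have "card (dl ` X) = cs.dim {g. \<forall>x. x \<notin> X \<longrightarrow> g x = 0}"
    by (rule cs.basis_card_eq_dim[OF _ dl_span[OF fin] dl_indep]) (auto simp: dl_def)
  moreover have "card (dl ` X) = card X" using card_image[OF inj_on_subset[OF dl_inj subset_UNIV]] by simp
  ultimately show ?thesis by simp
qed



lemma card_tgt: "card (tgt_idx n) = ((2*n-1) choose n) * n"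
proof -
  have "tgt_idx n = {P. P \<subseteq> {1..2*n-1} \<and> card P = n} \<times> {1..n}" unfolding tgt_idx_def by auto
  then show ?thesis by (simp add: card_cartesian_product n_subsets)
qed

lemma card_src: assumes "1 \<le> n" shows "card (src_idx n) = ((2*n-1) choose n) * n"
proof -
  have "src_idx n = {P. P \<subseteq> {1..2*n-1} \<and> card P = n - 1} \<times> {1..n}" unfolding src_idx_def by auto
  then have "card (src_idx n) = ((2*n-1) choose (n-1)) * n" by (simp add: card_cartesian_product n_subsets)
  moreover have "(2*n-1) choose (n-1) = (2*n-1) choose n"
    using binomial_symmetric[of "n-1" "2*n-1"] assms by simp
  ultimately show ?thesis by simp
qed

theorem mainTheorem11:
  fixes n :: nat
  assumes "n \<ge> 2"
  shows "psi n ` src_space n =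
           {g. \<forall>x. x \<notin> tgt_idx n - {({1..n}, n)} \<longrightarrow> g x = 0}
       \<and> vector_space.dim cscale (psi n ` src_space n) = n * ((2*n-1) choose n) - 1"
proof -
  define T where "T = tgt_idx n - {({1..n}, n)}"
  define W :: "(nat set \<times> nat \<Rightarrow> complex) set" where "W = {g. \<forall>x. x \<notin> T \<longrightarrow> g x = 0}"
  define I where "I = psi n ` src_space n"
  define s0 where "s0 = ({1..n-1}, 1::nat)"
  define B where "B = src_idx n - {s0}"
  define h where "h = (\<lambda>s. psi n (dl s))"
  define E where "E = h ` B"
  have n1: "1 \<le> n" using assms by simp
  have finT: "finite T" unfolding T_def using finite_tgt by simp
  have IW: "I \<subseteq> W" unfolding I_def W_def T_def using img_sub by blast
  have s0src: "s0 \<in> src_idx n" unfolding s0_def src_idx_def using n1 by auto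
  have t0tgt: "({1..n},n) \<in> tgt_idx n" unfolding tgt_idx_def using n1 by auto
  have cardT: "card T = n * ((2*n-1) choose n) - 1"
    unfolding T_def using t0tgt finite_tgt card_tgt[of n] by (simp add: card_Diff_singleton mult.commute)
  have cardB: "card B = card T"
    unfolding B_def using s0src finite_src card_src[OF n1] cardT by (simp add: card_Diff_singleton mult.commute)
  have finB: "finite B" unfolding B_def using finite_src by simp
  have hinj: "inj_on h B"
  proof (rule inj_onI)
    fix s s' assume s: "s \<in> B" and s': "s' \<in> B" and e: "h s = h s'"
    define F where "F = dl s - dl s'"
    have Fs: "F \<in> src_space n" unfolding F_def src_space_def dl_def using s s' unfolding B_def by auto
    have "psi n F = 0" unfolding F_def psi_diff using e unfolding h_def by simp
    moreover have "s \<noteq> s0" using s unfolding B_def by simp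
    ultimately have "F s = 0" using kernel[OF assms Fs] unfolding s0_def by blast
    then show "s = s'" unfolding F_def dl_def by (auto split: if_splits)
  qed
  have finE: "finite E" unfolding E_def using finB by simp
  have cardE: "card E = card T" unfolding E_def using card_image[OF hinj] cardB by simp
  have indE: "cs.independent E"
  proof (rule cs.independent_if_scalars_zero[OF finE])
    fix c :: "(nat set \<times> nat \<Rightarrow> complex) \<Rightarrow> complex" and v
    assume sm: "(\<Sum>x\<in>E. cscale (c x) x) = 0" and v: "v \<in> E"
    define F where "F = (\<lambda>x. if x \<in> B then c (h x) else 0)"
    have Fs: "F \<in> src_space n" unfolding F_def src_space_def B_def by auto
    have "psi n F = (\<Sum>s\<in>B. cscale (c (h s)) (h s))"
    proof (rule ext)
      fix Pl
      have "psi n F Pl = (\<Sum>s\<in>src_idx n. if s \<in> B then c (h s) * psi_coeff n s Pl else 0)"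
        unfolding psi_def F_def by (rule sum.cong) auto
      also have "\<dots> = (\<Sum>s\<in>B. c (h s) * psi_coeff n s Pl)"
      proof -
        have "{s \<in> src_idx n. s \<in> B} = B" unfolding B_def by auto
        then show ?thesis using sum.inter_filter[OF finite_src[of n], where g="\<lambda>s. c (h s) * psi_coeff n s Pl" and P="\<lambda>s. s \<in> B"] by simp
      qed
      also have "\<dots> = (\<Sum>s\<in>B. cscale (c (h s)) (h s)) Pl"
        unfolding sum_fun_app cscale_def h_def
      proof (rule sum.cong[OF refl])
        fix s assume "s \<in> B"
        then have "s \<in> src_idx n" unfolding B_def by simp
        then show "c (psi n (dl s)) * psi_coeff n s Pl = c (psi n (dl s)) * psi n (dl s) Pl"
          using psi_dl by simp
      qed
      finally show "psi n F Pl = (\<Sum>s\<in>B. cscale (c (h s)) (h s)) Pl" .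
    qed
    also have "\<dots> = (\<Sum>x\<in>E. cscale (c x) x)"
      unfolding E_def using sum.reindex[OF hinj, of "\<lambda>x. cscale (c x) x"] by simp
    finally have "psi n F = 0" using sm by simp
    obtain s where s: "s \<in> B" and vs: "v = h s" using v unfolding E_def by blast
    have "s \<noteq> s0" using s unfolding B_def by simp
    then have "F s = 0" using kernel[OF assms Fs \<open>psi n F = 0\<close>] unfolding s0_def by blast
    then show "c v = 0" unfolding F_def vs using s by simp
  qed
  have EI: "E \<subseteq> I"
    unfolding E_def I_def h_def B_def using dl_src by blast
  have EW: "E \<subseteq> W" using EI IW by blast
  have WspanE: "W \<subseteq> cs.span E"
  proof
    fix g assume g: "g \<in> W"
    show "g \<in> cs.span E"
    proof (rule ccontr)
      assume ng: "g \<notin> cs.span E"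
      then have ind: "cs.independent (insert g E)" using cs.independent_insertI indE by blast
      have "insert g E \<subseteq> cs.span (dl ` T)"
        using g EW dl_span[OF finT] unfolding W_def by blast
      then have "card (insert g E) \<le> card (dl ` T)"
        using cs.independent_span_bound[OF _ ind] finT by simp
      also have "\<dots> = card T" using card_image[OF inj_on_subset[OF dl_inj subset_UNIV]] by simp
      finally have "card (insert g E) \<le> card T" .
      moreover have "g \<notin> E" using ng cs.span_base by blast
      ultimately show False using finE cardE by simp
    qed
  qed
  have subI: "cs.subspace I"
    unfolding cs.subspace_def I_def
  proof (intro conjI ballI allI)
    have "(0 :: nat set \<times> nat \<Rightarrow> complex) \<in> src_space n" unfolding src_space_def by simp
    then show "0 \<in> psi n ` src_space n" using psi_zero by (metis image_eqI)
  next
    fix x y assume x: "x \<in> psi n ` src_space n" and y: "y \<in> psi n ` src_space n"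
    then obtain a b where a: "a \<in> src_space n" "x = psi n a" and b: "b \<in> src_space n" "y = psi n b" by blast
    have "a + b \<in> src_space n" using a b unfolding src_space_def by simp
    then show "x + y \<in> psi n ` src_space n" using a b psi_add by (metis image_eqI)
  next
    fix c x assume x: "x \<in> psi n ` src_space n"
    then obtain a where a: "a \<in> src_space n" "x = psi n a" by blast
    have "cscale c a \<in> src_space n" using a unfolding src_space_def cscale_def by simp
    then show "cscale c x \<in> psi n ` src_space n" using a psi_scale by (metis image_eqI)
  qed
  have "W \<subseteq> I" using WspanE cs.span_minimal[OF EI subI] by blast
  then have IeqW: "I = W" using IW by blast
  have "cs.dim I = card T" using IeqW dim_W[OF finT] unfolding W_def by simp
  then show ?thesis using IeqW cardT unfolding I_def W_def T_def by simp
qed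


end
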